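(* Let $A=(a_{ij})_{i,j=1}^n$ be a (row) stochastic matrix, i.e. $a_{ij}\ge 0$ and $\sum_{j=1}^n a_{ij}=1$ for every $i$. Then \[ \operatorname{Per}(A)\ \le\ 2^n\cdot\prod_{i,j=1}^n (1-a_{ij})^{1-a_{ij}}. \]
   Context: $\operatorname{Per}(A)=\sum_{\sigma\in S_n}\prod_{i=1}^n a_{i\sigma(i)}$ is the permanent. Convention: $0^0=1$. *)

theory Defs
  imports "HOL-Analysis.Analysis" "HOL-Combinatorics.Permutations"
begin

definition per :: "nat \<Rightarrow> (nat \<Rightarrow> nat \<Rightarrow> real) \<Rightarrow> real" where
  "per n A = (\<Sum>\<sigma> | \<sigma> permutes {0..<n}. \<Prod>i<n. A i (\<sigma> i))"

definition rpow :: "real \<Rightarrow> real \<Rightarrow> real" where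
  "rpow x y = (if x = 0 then (if y = 0 then 1 else 0) else x powr y)"

end

theory Submission imports Defs begin

definition K :: "real \<Rightarrow> real" where
  "K U = (if U \<le> 1 then U/2 else ln (1+U) - ln 2 + 1/2)"

lemma ln2_ge: "ln (2::real) \<ge> 1/2"
proof -
  have h: "norm (1/2::real) \<le> 1/2" by simp
  have "\<bar>exp (1/2::real)\<bar> \<le> 2" using exp_bound_half[OF h] by (simp only: real_norm_def)
  hence "exp (1/2::real) \<le> 2" using abs_ge_self order_trans by blast
  hence "ln (exp (1/2::real)) \<le> ln 2" by (subst ln_le_cancel_iff) auto
  thus ?thesis by (simp only: ln_exp)
qed

lemma ln_ge_frac: fixes u U :: real assumes "0 \<le> u" shows "u/(1+u) \<le> ln (1+u)"
proof -
  have "ln (1/(1+u)) \<le> 1/(1+u) - 1" using assms by (intro ln_le_minus_one) simp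
  hence "- ln (1+u) \<le> 1/(1+u) - 1" using assms by (simp add: ln_div)
  moreover have "1/(1+u) - 1 = - (u/(1+u))" using assms by (simp add: field_simps)
  ultimately show ?thesis by linarith
qed

lemma g1: fixes u U :: real assumes "0 \<le> u" "u \<le> 1" shows "u/2 \<le> (u/(1+u))*(1/2 + ln (1+u))"
proof -
  have "u/(1+u) \<ge> u/2" using assms by (intro divide_left_mono) auto
  hence "ln(1+u) \<ge> u/2" using ln_ge_frac[OF assms(1)] by linarith
  hence "u*(u/2) \<le> u*ln(1+u)" using assms by (intro mult_left_mono) auto
  hence "(1+u)*(u/2) \<le> u*(1/2 + ln(1+u))" by (simp add: algebra_simps)
  thus ?thesis using assms by (simp add: field_simps)
qed

lemma g2: fixes u U :: real assumes "1 \<le> u" shows "ln (1+u) - ln 2 + 1/2 \<le> (u/(1+u))*(1/2 + ln (1+u))"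
proof -
  have "ln ((1+u)/2) \<le> (1+u)/2 - 1" using assms by (intro ln_le_minus_one) simp
  moreover have "ln ((1+u)/2) = ln (1+u) - ln 2" using assms by (simp add: ln_div)
  ultimately have "ln (1+u) \<le> ln 2 + (u-1)/2" by (simp add: field_simps)
  moreover have "u*(1/2) \<le> u * ln 2" using ln2_ge assms by (intro mult_left_mono) auto
  ultimately have "ln (1+u) \<le> (1+u)*ln 2 - 1/2" by (simp add: algebra_simps add_divide_distrib diff_divide_distrib)
  moreover have "(1+u)*(ln (1+u) - ln 2 + 1/2) - u*(1/2 + ln(1+u)) = ln(1+u) - (1+u)*ln 2 + 1/2"
    by (simp add: algebra_simps)
  ultimately have "(1+u)*(ln (1+u) - ln 2 + 1/2) \<le> u*(1/2 + ln(1+u))" by linarith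
  thus ?thesis using assms by (simp add: field_simps)
qed

lemma H_le_half: fixes u U :: real assumes "0 \<le> U" shows "ln (1+U) - ln 2 + 1/2 \<le> U/2"
proof -
  have "ln ((1+U)/2) \<le> (1+U)/2 - 1" using assms by (intro ln_le_minus_one) simp
  thus ?thesis using assms by (simp add: ln_div)
qed

lemma K_ge_H: fixes u U :: real assumes "0 \<le> U" shows "ln (1+U) - ln 2 + 1/2 \<le> K U"
  using H_le_half[OF assms] by (simp add: K_def)

lemma K_le_half: fixes u U :: real assumes "0 \<le> U" shows "K U \<le> U/2"
  using H_le_half[OF assms] by (simp add: K_def)

lemma lnd: fixes u U :: real assumes "0 \<le> U" "0 \<le> u" shows "ln (1+U+u) - ln (1+U) \<le> u/(1+U)"
proof -
  have "ln ((1+U+u)/(1+U)) \<le> (1+U+u)/(1+U) - 1" using assms by (intro ln_le_minus_one) simp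
  moreover have "(1+U+u)/(1+U) - 1 = u/(1+U)" using assms by (simp add: field_simps)
  ultimately show ?thesis using assms by (simp add: ln_div)
qed

lemma Kstep: fixes u U :: real assumes "0 \<le> U" "0 \<le> u" shows "K (U+u) \<le> K U + (u/(1+u))*(1/2 + ln (1+u))"
proof -
  let ?g = "(u/(1+u))*(1/2 + ln (1+u))"
  show ?thesis
  proof (cases "u \<le> 1")
    case u1: True
    have gu: "u/2 \<le> ?g" using g1 assms u1 by simp
    show ?thesis
    proof (cases "U \<le> 1")
      case True
      have "K (U+u) \<le> (U+u)/2" using K_le_half assms by simp
      moreover have "K U = U/2" using True by (simp add: K_def)
      ultimately show ?thesis using gu unfolding add_divide_distrib by linarith
    next
      case False
      have "u/(1+U) \<le> u/2" using False assms by (intro divide_left_mono) auto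
      hence "ln(1+U+u) - ln (1+U) \<le> u/2" using lnd[OF assms] by linarith
      moreover have "K (U+u) = ln (1+U+u) - ln 2 + 1/2" using False assms by (simp add: K_def add.assoc)
      moreover have "K U = ln (1+U) - ln 2 + 1/2" using False by (simp add: K_def)
      ultimately show ?thesis using gu by linarith
    qed
  next
    case False
    have gu: "ln (1+u) - ln 2 + 1/2 \<le> ?g" using g2 False by simp
    show ?thesis
    proof (cases "U \<le> 1")
      case True
      have "ln(1+u+U) - ln (1+u) \<le> U/(1+u)" using lnd[of u U] assms by simp
      moreover have "U/(1+u) \<le> U/2" using False assms by (intro divide_left_mono) auto
      moreover have "ln (1+u+U) = ln (1+U+u)" by (simp add: add_ac)
      ultimately have "ln(1+U+u) - ln 2 + 1/2 \<le> U/2 + ?g" using gu by linarith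
      moreover have "K (U+u) = ln (1+U+u) - ln 2 + 1/2" using False assms by (simp add: K_def add.assoc)
      moreover have "K U = U/2" using True by (simp add: K_def)
      ultimately show ?thesis by linarith
    next
      case F2: False
      have "ln(1+U+u) - ln (1+U) \<le> ln (2+u) - ln 2"
      proof -
        have e1: "1 + u/(1+U) = (1+U+u)/(1+U)" using assms by (simp add: field_simps)
        have "ln(1+U+u) - ln (1+U) = ln (1 + u/(1+U))" unfolding e1 using assms
          by (subst ln_div) auto
        also have "\<dots> \<le> ln (1 + u/2)"
        proof -
          have h: "u/(1+U) \<le> u/2" using F2 assms by (intro divide_left_mono) auto
          have "0 < 1 + u/(1+U)" using assms by (simp add: add_pos_nonneg)
          thus ?thesis using h assms by (subst ln_le_cancel_iff) auto
        qed
        also have "\<dots> = ln ((2+u)/2)" by (simp add: field_simps)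
        also have "\<dots> = ln (2+u) - ln 2" using assms by (subst ln_div) auto
        finally show ?thesis .
      qed
      moreover have "ln (2+u) - ln 2 \<le> ln (1+u) - ln 2 + 1/2"
      proof -
        have "ln ((2+u)/(1+u)) \<le> (2+u)/(1+u) - 1" using assms by (intro ln_le_minus_one) simp
        moreover have "(2+u)/(1+u) - 1 \<le> 1/2" using False by (simp add: field_simps)
        moreover have "ln ((2+u)/(1+u)) = ln (2+u) - ln (1+u)" using assms by (simp add: ln_div)
        ultimately show ?thesis by linarith
      qed
      moreover have "K (U+u) = ln (1+U+u) - ln 2 + 1/2" using F2 assms by (simp add: K_def add.assoc)
      moreover have "K U = ln (1+U) - ln 2 + 1/2" using F2 by (simp add: K_def)
      ultimately show ?thesis using gu by linarith
    qed
  qed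
qed
lemma fin: fixes q0 q1 s f :: real
  assumes q0: "0 < q0" and le: "q0 \<le> q1" and m: "q0 * exp (K (q1/q0 - 1)) \<le> exp (s/2) * f"
  shows "q1 \<le> 2 * exp ((s-1)/2) * f"
proof -
  define U where "U = q1/q0 - 1"
  have U0: "0 \<le> U" using q0 le by (simp add: U_def field_simps)
  have q1: "q1 = q0 * (1+U)" using q0 by (simp add: U_def field_simps)
  have "ln (1+U) \<le> K U + ln 2 - 1/2" using K_ge_H[OF U0] by linarith
  hence "exp (ln (1+U)) \<le> exp (K U + ln 2 + (-1/2))" by simp
  moreover have "exp (K U + ln 2 + (-1/2)) = exp (K U) * (2 * exp (-1/2))" by (simp only: exp_add) simp
  moreover have "exp (ln (1+U)) = 1 + U" using U0 by simp
  ultimately have "1+U \<le> exp (K U) * (2 * exp (-1/2))" by simp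
  hence "q1 \<le> q0 * (exp (K U) * (2 * exp (-1/2)))" using q1 q0 by (simp add: mult_left_mono)
  also have "\<dots> = (q0 * exp (K U)) * (2 * exp (-1/2))" by simp
  also have "\<dots> \<le> (exp (s/2) * f) * (2 * exp (-1/2))" using m by (intro mult_right_mono) (auto simp: U_def)
  also have "\<dots> = 2 * (exp (s/2) * exp (-1/2)) * f" by simp
  also have "exp (s/2) * exp (-1/2) = exp ((s-1)/2)" by (simp add: exp_add[symmetric] diff_divide_distrib)
  finally show ?thesis by simp
qed

definition ff :: "real \<Rightarrow> real" where "ff c = rpow (1-c) (1-c)"

lemma ff_lt1: assumes "c < 1" shows "ff c = (1-c) * exp (- c * ln (1-c))"
proof -
  have "ff c = exp ((1-c) * ln (1-c))" using assms by (simp add: ff_def rpow_def powr_def)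
  also have "\<dots> = exp (ln (1-c) + (- c * ln (1-c)))" by (simp add: algebra_simps)
  also have "\<dots> = exp (ln (1-c)) * exp (- c * ln (1-c))" by (rule exp_add)
  also have "\<dots> = (1-c) * exp (- c * ln (1-c))" using assms by simp
  finally show ?thesis .
qed

lemma ff_1: "ff 1 = 1" by (simp add: ff_def rpow_def)

lemma ff_ge: assumes "0 \<le> c" "c \<le> 1" shows "1 - c \<le> ff c" "0 < ff c"
proof -
  show "1 - c \<le> ff c"
  proof (cases "c = 1")
    case True thus ?thesis by (simp add: ff_1)
  next
    case False
    hence c1: "c < 1" using assms by simp
    have "ln (1-c) \<le> 0" using c1 assms by simp
    hence "0 \<le> - c * ln (1-c)" using assms by (simp add: mult_nonneg_nonpos)
    hence "1 \<le> exp (- c * ln (1-c))" by simp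
    hence "(1-c) * 1 \<le> (1-c) * exp (- c * ln (1-c))" using c1 by (intro mult_left_mono) auto
    thus ?thesis using ff_lt1[OF c1] by simp
  qed
  show "0 < ff c"
  proof (cases "c = 1")
    case True thus ?thesis by (simp add: ff_1)
  next
    case False
    hence c1: "c < 1" using assms by simp
    thus ?thesis using ff_lt1[OF c1] by simp
  qed
qed

fun Q0 :: "(nat \<Rightarrow> real) \<Rightarrow> nat \<Rightarrow> real" where
  "Q0 c 0 = 1" | "Q0 c (Suc m) = (1 - c m) * Q0 c m"

fun Q1 :: "(nat \<Rightarrow> real) \<Rightarrow> nat \<Rightarrow> real" where
  "Q1 c 0 = 1" | "Q1 c (Suc m) = (1 - c m) * Q1 c m + c m * Q0 c m"

lemma col_inv:
  assumes "\<And>i. i < m \<Longrightarrow> 0 \<le> c i \<and> c i \<le> 1"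
  shows "0 \<le> Q0 c m \<and> Q0 c m \<le> Q1 c m \<and> Q0 c m \<le> (\<Prod>i<m. ff (c i)) \<and> 0 < (\<Prod>i<m. ff (c i)) \<and>
    (0 < Q0 c m \<longrightarrow> Q0 c m * exp (K (Q1 c m / Q0 c m - 1)) \<le> exp ((\<Sum>i<m. c i)/2) * (\<Prod>i<m. ff (c i))) \<and>
    Q1 c m \<le> 2 * exp (((\<Sum>i<m. c i) - 1)/2) * (\<Prod>i<m. ff (c i))"
  using assms
proof (induction m)
  case 0
  have "1 \<le> 2 * exp ((0 - 1)/2) * (1::real)"
    using fin[of 1 1 0 1] by (simp add: K_def)
  thus ?case by (simp add: K_def)
next
  case (Suc m)
  define a where "a = c m"
  define q0 where "q0 = Q0 c m"
  define q1 where "q1 = Q1 c m"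
  define F where "F = (\<Prod>i<m. ff (c i))"
  define S where "S = (\<Sum>i<m. c i)"
  have a0: "0 \<le> a" and a1: "a \<le> 1" using Suc.prems[of m] by (auto simp: a_def)
  have IH: "0 \<le> q0" "q0 \<le> q1" "q0 \<le> F" "0 < F"
     "0 < q0 \<longrightarrow> q0 * exp (K (q1 / q0 - 1)) \<le> exp (S/2) * F"
     "q1 \<le> 2 * exp ((S - 1)/2) * F"
    using Suc.IH Suc.prems by (auto simp: q0_def q1_def F_def S_def)
  have S0: "0 \<le> S" unfolding S_def using Suc.prems by (intro sum_nonneg) auto
  have e: "Q0 c (Suc m) = (1-a)*q0" "Q1 c (Suc m) = (1-a)*q1 + a*q0"
    "(\<Prod>i<Suc m. ff (c i)) = F * ff a" "(\<Sum>i<Suc m. c i) = S + a"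
    by (simp_all add: a_def q0_def q1_def F_def S_def)
  have ffa: "1 - a \<le> ff a" "0 < ff a" using ff_ge[OF a0 a1] by auto
  have g1: "0 \<le> (1-a)*q0" using IH a1 by simp
  have g2: "(1-a)*q0 \<le> (1-a)*q1 + a*q0"
  proof -
    have "0 \<le> (1-a)*(q1-q0)" using IH a1 by simp
    moreover have "0 \<le> a*q0" using IH a0 by simp
    ultimately show ?thesis by (simp add: algebra_simps)
  qed
  have g3: "(1-a)*q0 \<le> F * ff a"
  proof -
    have "(1-a)*q0 \<le> ff a * F" using ffa IH a1 by (intro mult_mono) auto
    thus ?thesis by (simp add: mult.commute)
  qed
  have g4: "0 < F * ff a" using IH ffa by simp
  have g5: "0 < (1-a)*q0 \<longrightarrow> (1-a)*q0 * exp (K (((1-a)*q1 + a*q0) / ((1-a)*q0) - 1)) \<le> exp ((S+a)/2) * (F * ff a)"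
  proof
    assume pos: "0 < (1-a)*q0"
    have a1': "a < 1" using pos IH a1 by (cases "a = 1") auto
    have q0p: "0 < q0" using pos a1' by (simp add: zero_less_mult_iff)
    define U where "U = q1/q0 - 1"
    define u where "u = a/(1-a)"
    have U0: "0 \<le> U" using q0p IH by (simp add: U_def field_simps)
    have u0: "0 \<le> u" using a0 a1' by (simp add: u_def)
    have eqU: "((1-a)*q1 + a*q0) / ((1-a)*q0) - 1 = U + u" using q0p a1'
      by (simp add: U_def u_def field_simps)
    have u1: "u/(1+u) = a" "1 + u = 1/(1-a)" using a1' by (simp_all add: u_def field_simps)
    have lnu: "ln (1+u) = - ln (1-a)" using a1' by (simp add: u1 ln_div)
    have gg: "(u/(1+u))*(1/2 + ln (1+u)) = a/2 - a * ln (1-a)"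
      by (subst u1(1), subst lnu) (simp add: algebra_simps)
    have ks: "K (U+u) \<le> K U + (a/2 - a * ln (1-a))"
      using Kstep[OF U0 u0] unfolding gg .
    have "(1-a)*q0 * exp (K (U+u)) \<le> (1-a)*q0 * exp (K U + (a/2 - a * ln (1-a)))"
      using ks pos by (intro mult_left_mono) auto
    also have "\<dots> = (1-a)*q0 * (exp (K U) * (exp (- a * ln (1-a)) * exp (a/2)))"
      by (simp only: exp_add[symmetric]) (simp add: algebra_simps)
    also have "\<dots> = (q0 * exp (K U)) * ((1-a) * exp (- a * ln (1-a)) * exp (a/2))"
      by (simp add: mult_ac)
    also have "\<dots> \<le> (exp (S/2) * F) * ((1-a) * exp (- a * ln (1-a)) * exp (a/2))"
      using IH(5) q0p a1' unfolding U_def by (intro mult_right_mono) auto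
    also have "\<dots> = (exp (S/2) * exp (a/2)) * (F * ((1-a) * exp (- a * ln (1-a))))"
      by (simp add: mult_ac)
    also have "exp (S/2) * exp (a/2) = exp ((S+a)/2)" by (simp add: exp_add[symmetric] add_divide_distrib)
    also have "(1-a) * exp (- a * ln (1-a)) = ff a" using ff_lt1[OF a1'] by simp
    finally show "(1-a)*q0 * exp (K (((1-a)*q1 + a*q0) / ((1-a)*q0) - 1)) \<le> exp ((S+a)/2) * (F * ff a)"
      unfolding eqU .
  qed
  have g6: "(1-a)*q1 + a*q0 \<le> 2 * exp ((S + a - 1)/2) * (F * ff a)"
  proof (cases "0 < (1-a)*q0")
    case True
    show ?thesis using fin[OF True g2] g5 True by simp
  next
    case False
    show ?thesis
    proof (cases "a = 1")
      case True
      have "0 \<le> (S + a - 1)/2" using S0 True by simp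
      hence "1 \<le> exp ((S + a - 1)/2)" by simp
      hence "1 \<le> 2 * exp ((S + a - 1)/2)" by linarith
      hence "q0 * 1 \<le> F * (2 * exp ((S + a - 1)/2))" using IH by (intro mult_mono) auto
      thus ?thesis using True by (simp add: ff_1 mult_ac)
    next
      case F2: False
      hence q00: "q0 = 0" using False g1 a1 IH by (simp add: zero_less_mult_iff)
      have "(1-a)*q1 \<le> ff a * (2 * exp ((S - 1)/2) * F)" using IH ffa a1
        by (intro mult_mono) auto
      also have "\<dots> \<le> ff a * (2 * exp ((S + a - 1)/2) * F)"
        using ffa IH a0 by (intro mult_left_mono mult_right_mono) auto
      finally show ?thesis using q00 by (simp add: mult_ac)
    qed
  qed
  show ?case unfolding e using IH g1 g2 g3 g4 g5 g6 by (simp add: add.assoc add_ac)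
qed
lemma lemL:
  fixes a p q :: "nat \<Rightarrow> real"
  assumes "finite I" "\<And>k. k \<in> I \<Longrightarrow> 0 \<le> a k \<and> 0 \<le> q k \<and> q k \<le> p k" "sum a I \<le> 1"
  shows "(1 - sum a I) * prod p I + (\<Sum>j\<in>I. a j * q j * prod p (I - {j}))
         \<le> (\<Prod>k\<in>I. (1 - a k) * p k + a k * q k)"
  using assms
proof (induction I rule: finite_induct)
  case empty thus ?case by simp
next
  case (insert x F)
  define S where "S = sum a F"
  define P where "P = prod p F"
  define T where "T = (\<Sum>j\<in>F. a j * q j * prod p (F - {j}))"
  have hx: "0 \<le> a x" "0 \<le> q x" "q x \<le> p x" using insert.prems by auto
  have S0: "0 \<le> S" unfolding S_def using insert.prems by (intro sum_nonneg) auto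
  have Sle: "a x + S \<le> 1" using insert.prems insert.hyps by (simp add: S_def)
  have SF1: "sum a F \<le> 1" using Sle hx(1) unfolding S_def by linarith
  have IH: "(1 - S) * P + T \<le> (\<Prod>k\<in>F. (1 - a k) * p k + a k * q k)"
    unfolding S_def P_def T_def using insert.prems SF1 by (intro insert.IH) auto
  have P0: "0 \<le> P" unfolding P_def using insert.prems by (intro prod_nonneg) (auto intro: order_trans)
  have TS: "T \<le> S * P"
  proof -
    have "T \<le> (\<Sum>j\<in>F. a j * p j * prod p (F - {j}))" unfolding T_def using insert.prems
      by (intro sum_mono mult_right_mono mult_left_mono prod_nonneg) (auto intro: order_trans)
    also have "\<dots> = (\<Sum>j\<in>F. a j * P)" unfolding P_def using insert.hyps
      by (intro sum.cong refl) (simp add: prod.remove mult.assoc)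
    also have "\<dots> = S * P" by (simp add: S_def sum_distrib_right)
    finally show ?thesis .
  qed
  have fac: "0 \<le> (1 - a x) * p x + a x * q x" using hx Sle S0 by (intro add_nonneg_nonneg mult_nonneg_nonneg) auto
  have T': "(\<Sum>j\<in>insert x F. a j * q j * prod p (insert x F - {j})) = a x * q x * P + p x * T"
  proof -
    have "(\<Sum>j\<in>F. a j * q j * prod p (insert x F - {j})) = (\<Sum>j\<in>F. p x * (a j * q j * prod p (F - {j})))"
    proof (intro sum.cong refl)
      fix j assume "j \<in> F"
      hence "insert x F - {j} = insert x (F - {j})" using insert.hyps by auto
      thus "a j * q j * prod p (insert x F - {j}) = p x * (a j * q j * prod p (F - {j}))"
        using insert.hyps by simp
    qed
    thus ?thesis using insert.hyps by (simp add: P_def T_def sum_distrib_left)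
  qed
  have "(1 - sum a (insert x F)) * prod p (insert x F) + (\<Sum>j\<in>insert x F. a j * q j * prod p (insert x F - {j}))
        = (1 - a x - S) * (p x * P) + (a x * q x * P + p x * T)"
    using insert.hyps T' by (simp add: S_def P_def)
  also have "\<dots> = ((1 - a x) * p x + a x * q x) * ((1 - S) * P + T) - a x * (p x - q x) * (S * P - T)"
    by (simp add: algebra_simps)
  also have "\<dots> \<le> ((1 - a x) * p x + a x * q x) * ((1 - S) * P + T)"
    using hx TS by simp
  also have "\<dots> \<le> ((1 - a x) * p x + a x * q x) * (\<Prod>k\<in>F. (1 - a k) * p k + a k * q k)"
    using IH fac by (intro mult_left_mono)
  also have "\<dots> = (\<Prod>k\<in>insert x F. (1 - a k) * p k + a k * q k)" using insert.hyps by simp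
  finally show ?case .
qed

lemma per_0: "per 0 B = 1"
  by (simp add: per_def permutes_empty)

lemma per_Suc: "per (Suc m) B = (\<Sum>b<Suc m. B m b * per m (\<lambda>i j. B i (Transposition.transpose m b j)))"
proof -
  have ins: "{0..<Suc m} = insert m {0..<m}" by auto
  have "per (Suc m) B = (\<Sum>b\<in>insert m {0..<m}. \<Sum>q | q permutes {0..<m}. \<Prod>i<Suc m. B i ((Transposition.transpose m b \<circ> q) i))"
    unfolding per_def ins by (rule sum_over_permutations_insert) auto
  also have "\<dots> = (\<Sum>b\<in>insert m {0..<m}. \<Sum>q | q permutes {0..<m}. B m b * (\<Prod>i<m. B i (Transposition.transpose m b (q i))))"
  proof (intro sum.cong refl)
    fix b q assume "q \<in> {q. q permutes {0..<m}}"
    hence qm: "q m = m" by (auto intro: permutes_not_in)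
    show "(\<Prod>i<Suc m. B i ((Transposition.transpose m b \<circ> q) i)) = B m b * (\<Prod>i<m. B i (Transposition.transpose m b (q i)))"
      using qm by (simp add: mult.commute)
  qed
  also have "\<dots> = (\<Sum>b<Suc m. B m b * per m (\<lambda>i j. B i (Transposition.transpose m b j)))"
    unfolding per_def by (simp add: sum_distrib_left lessThan_Suc ins[symmetric] atLeast0LessThan)
  finally show ?thesis .
qed
lemma Q0_Q1_nonneg:
  assumes "\<And>i. i < m \<Longrightarrow> 0 \<le> c i \<and> c i \<le> 1"
  shows "0 \<le> Q0 c m" "Q0 c m \<le> Q1 c m"
  using col_inv[OF assms] by auto

lemma per_bound:
  fixes n :: nat
  assumes "m \<le> n" "\<And>i. i < m \<Longrightarrow> (\<forall>j<n. 0 \<le> B i j) \<and> (\<Sum>j<n. B i j) = 1"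
  shows "per m B \<le> (\<Prod>k<n. if k < m then Q1 (\<lambda>i. B i k) m else Q0 (\<lambda>i. B i k) m)"
  using assms
proof (induction m arbitrary: B)
  case 0
  thus ?case by (simp add: per_0)
next
  case (Suc m)
  have mn: "m < n" using Suc.prems by simp
  have ent: "0 \<le> B i j \<and> B i j \<le> 1" if "i < Suc m" "j < n" for i j
  proof -
    have h: "\<forall>j<n. 0 \<le> B i j" "(\<Sum>j<n. B i j) = 1" using Suc.prems(2)[OF that(1)] by auto
    have "B i j \<le> (\<Sum>j<n. B i j)" using h that by (intro member_le_sum) auto
    thus ?thesis using h that by auto
  qed
  define a where "a k = B m k" for k
  define p where "p k = (if k < Suc m then Q1 (\<lambda>i. B i k) m else Q0 (\<lambda>i. B i k) m)" for k
  define q where "q k = (if k < Suc m then Q0 (\<lambda>i. B i k) m else 0)" for k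
  have pq: "0 \<le> a k \<and> 0 \<le> q k \<and> q k \<le> p k" if "k < n" for k
  proof -
    have c: "\<And>i. i < m \<Longrightarrow> 0 \<le> B i k \<and> B i k \<le> 1" using ent that by auto
    show ?thesis using Q0_Q1_nonneg[OF c] ent[of m k] that by (auto simp: a_def p_def q_def)
  qed
  have asum: "sum a {..<n} = 1" using Suc.prems(2)[of m] by (simp add: a_def)
  have step: "per m (\<lambda>i j. B i (Transposition.transpose m b j)) \<le> q b * prod p ({..<n} - {b})"
    if b: "b < Suc m" for b
  proof -
    let ?t = "Transposition.transpose m b"
    have tp: "?t permutes {..<n}" using b mn by (intro permutes_swap_id) auto
    have prem: "\<And>i. i < m \<Longrightarrow> (\<forall>j<n. 0 \<le> B i (?t j)) \<and> (\<Sum>j<n. B i (?t j)) = 1"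
    proof -
      fix i assume i: "i < m"
      have "\<forall>j<n. 0 \<le> B i (?t j)" using ent i tp permutes_in_image[OF tp] by auto
      moreover have "(\<Sum>j<n. B i (?t j)) = (\<Sum>j<n. B i j)"
        using sum.permute[OF tp, of "\<lambda>j. B i j"] by (simp add: comp_def)
      ultimately show "(\<forall>j<n. 0 \<le> B i (?t j)) \<and> (\<Sum>j<n. B i (?t j)) = 1"
        using Suc.prems(2)[of i] i by simp
    qed
    have "per m (\<lambda>i j. B i (?t j)) \<le> (\<Prod>k<n. if k < m then Q1 (\<lambda>i. B i (?t k)) m else Q0 (\<lambda>i. B i (?t k)) m)"
      using Suc.IH[of "\<lambda>i j. B i (?t j)"] prem mn by simp
    also have "\<dots> = (\<Prod>k<n. (\<lambda>x. if ?t x < m then Q1 (\<lambda>i. B i x) m else Q0 (\<lambda>i. B i x) m) (?t k))"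
      by simp
    also have "\<dots> = (\<Prod>k<n. if ?t k < m then Q1 (\<lambda>i. B i k) m else Q0 (\<lambda>i. B i k) m)"
      using prod.permute[OF tp, of "\<lambda>x. if ?t x < m then Q1 (\<lambda>i. B i x) m else Q0 (\<lambda>i. B i x) m"]
      by (simp add: comp_def)
    also have "\<dots> = (\<Prod>k<n. if k = b then q k else p k)"
    proof (intro prod.cong refl)
      fix k assume "k \<in> {..<n}"
      show "(if ?t k < m then Q1 (\<lambda>i. B i k) m else Q0 (\<lambda>i. B i k) m) = (if k = b then q k else p k)"
        using b by (cases "k = m"; cases "k = b") (auto simp: p_def q_def)
    qed
    also have "\<dots> = q b * prod p ({..<n} - {b})"
      using b mn by (subst prod.remove[of _ b]) auto
    finally show ?thesis .
  qed
  have "per (Suc m) B = (\<Sum>b<Suc m. a b * per m (\<lambda>i j. B i (Transposition.transpose m b j)))"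
    by (simp add: per_Suc a_def)
  also have "\<dots> \<le> (\<Sum>b<Suc m. a b * (q b * prod p ({..<n} - {b})))"
    using step pq mn by (intro sum_mono mult_left_mono) auto
  also have "\<dots> = (\<Sum>b<n. a b * q b * prod p ({..<n} - {b}))"
    unfolding mult.assoc using mn by (intro sum.mono_neutral_left) (auto simp: q_def)
  also have "\<dots> = (1 - sum a {..<n}) * prod p {..<n} + (\<Sum>b<n. a b * q b * prod p ({..<n} - {b}))"
    using asum by simp
  also have "\<dots> \<le> (\<Prod>k<n. (1 - a k) * p k + a k * q k)"
    using pq asum by (intro lemL) auto
  also have "\<dots> = (\<Prod>k<n. if k < Suc m then Q1 (\<lambda>i. B i k) (Suc m) else Q0 (\<lambda>i. B i k) (Suc m))"
    by (intro prod.cong refl) (auto simp: a_def p_def q_def)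
  finally show ?case .
qed
theorem theorem1p3:
  fixes n :: nat and A :: "nat \<Rightarrow> nat \<Rightarrow> real"
  assumes nonneg: "\<And>i j. i < n \<Longrightarrow> j < n \<Longrightarrow> A i j \<ge> 0"
    and rowsum: "\<And>i. i < n \<Longrightarrow> (\<Sum>j<n. A i j) = 1"
  shows "per n A \<le> 2 ^ n * (\<Prod>i<n. \<Prod>j<n. rpow (1 - A i j) (1 - A i j))"
proof -
  have ent: "\<And>i k. i < n \<Longrightarrow> k < n \<Longrightarrow> 0 \<le> A i k \<and> A i k \<le> 1"
  proof -
    fix i k assume ik: "i < n" "k < n"
    have "A i k \<le> (\<Sum>j<n. A i j)" using ik nonneg by (intro member_le_sum) auto
    thus "0 \<le> A i k \<and> A i k \<le> 1" using ik nonneg rowsum by auto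
  qed
  have "per n A \<le> (\<Prod>k<n. if k < n then Q1 (\<lambda>i. A i k) n else Q0 (\<lambda>i. A i k) n)"
    using nonneg rowsum by (intro per_bound) auto
  also have "\<dots> = (\<Prod>k<n. Q1 (\<lambda>i. A i k) n)" by (intro prod.cong refl) auto
  also have "\<dots> \<le> (\<Prod>k<n. 2 * exp (((\<Sum>i<n. A i k) - 1)/2) * (\<Prod>i<n. ff (A i k)))"
  proof (intro prod_mono conjI)
    fix k assume "k \<in> {..<n}"
    hence c: "\<And>i. i < n \<Longrightarrow> 0 \<le> A i k \<and> A i k \<le> 1" using ent by auto
    show "0 \<le> Q1 (\<lambda>i. A i k) n" using Q0_Q1_nonneg[of n "\<lambda>i. A i k", OF c] by linarith
    show "Q1 (\<lambda>i. A i k) n \<le> 2 * exp (((\<Sum>i<n. A i k) - 1)/2) * (\<Prod>i<n. ff (A i k))"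
      using col_inv[of n "\<lambda>i. A i k", OF c] by blast
  qed
  also have "\<dots> = 2 ^ n * exp (\<Sum>k<n. ((\<Sum>i<n. A i k) - 1)/2) * (\<Prod>k<n. \<Prod>i<n. ff (A i k))"
    by (simp add: prod.distrib exp_sum)
  also have "(\<Sum>k<n. ((\<Sum>i<n. A i k) - 1)/2) = 0"
  proof -
    have "(\<Sum>k<n. (\<Sum>i<n. A i k)) = (\<Sum>i<n. (\<Sum>k<n. A i k))" by (rule sum.swap)
    also have "\<dots> = (\<Sum>i<n. 1)" using rowsum by simp
    finally have "(\<Sum>k<n. (\<Sum>i<n. A i k)) = n" by simp
    thus ?thesis by (simp add: sum_divide_distrib[symmetric] sum_subtractf)
  qed
  also have "(\<Prod>k<n. \<Prod>i<n. ff (A i k)) = (\<Prod>i<n. \<Prod>j<n. rpow (1 - A i j) (1 - A i j))"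
    by (subst prod.swap) (simp add: ff_def)
  finally show ?thesis by simp
qed
end
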